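(* Let $w$ be a non-empty finite LSP word. Then there exists a letter $a$ occurring in $w$ such that $wa$ is LSP.
   Context: A finite word $u$ is a left special factor of a word $w$ if there are distinct letters $x\neq y$ such that $xu$ and $yu$ are factors of $w$. A word is LSP if every left special factor of it is a prefix of it. *)

theory Defs
  imports Main "HOL-Library.Sublist"
begin

text \<open>Finite words are lists over an arbitrary alphabet 'a. A factor is a
contiguous sublist (library notion sublist), a prefix is the library prefix.\<close>

definition left_special :: "'a list \<Rightarrow> 'a list \<Rightarrow> bool" where
  "left_special u w \<longleftrightarrow>
     (\<exists>x y. x \<noteq> y \<and> sublist (x # u) w \<and> sublist (y # u) w)"

definition LSP :: "'a list \<Rightarrow> bool" where
  "LSP w \<longleftrightarrow> (\<forall>u. left_special u w \<longrightarrow> prefix u w)"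

end

theory Submission
  imports Defs
begin

lemma new_fact_suffix:
  assumes "sublist s (w @ [a])" "\<not> sublist s w"
  shows "\<exists>v. s = v @ [a] \<and> suffix v w"
proof -
  from assms(1) obtain p q where pq: "w @ [a] = p @ s @ q" by (auto simp: sublist_def)
  show ?thesis
  proof (cases q rule: rev_cases)
    case Nil
    then have "w @ [a] = p @ s" using pq by simp
    moreover have "s \<noteq> []" using assms(2) by auto
    ultimately obtain v where "s = v @ [a]" "w = p @ v"
      by (metis append_assoc append_butlast_last_id butlast_append last_appendR butlast_snoc last_snoc)
    then show ?thesis by (auto simp: suffix_def)
  next
    case (snoc q' b)
    then have "w = p @ s @ q'" using pq by simp
    then have False using assms(2) by (auto simp: sublist_def)
    then show ?thesis ..
  qed
qed

lemma suffix_cons_eq: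
  assumes "suffix (x # v) w" "suffix (y # v) w"
  shows "x = y"
  using assms by (auto simp: suffix_def)

lemma l1: "sublist (y # v @ [a]) w \<Longrightarrow> sublist (y # v) w"
proof -
  assume h: "sublist (y # v @ [a]) w"
  have "sublist (y # v) (y # v @ [a])" by (rule prefix_imp_sublist) simp
  then show ?thesis using h by (rule sublist_order.order_trans)
qed
lemma l2: "finite S \<Longrightarrow> S \<noteq> {} \<Longrightarrow> \<exists>vs\<in>S. \<forall>v\<in>S. length v \<le> length (vs::'a list)"
proof -
  assume f: "finite S" and n: "S \<noteq> {}"
  have "Max (length ` S) \<in> length ` S" using f n by simp
  then obtain vs where "vs \<in> S" "length vs = Max (length ` S)" by auto
  moreover have "\<forall>v\<in>S. length v \<le> Max (length ` S)" using f by simp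
  ultimately show ?thesis by metis
qed
lemma l3: "prefix (vs @ [a]) w \<Longrightarrow> a \<in> set w"
  by (auto simp: prefix_def)
lemma l4: "suffix v vs \<Longrightarrow> v \<noteq> vs \<Longrightarrow> \<exists>p z. vs = p @ z # v"
proof -
  assume "suffix v vs" "v \<noteq> vs"
  then obtain q where q: "vs = q @ v" "q \<noteq> []" by (auto simp: suffix_def)
  then have "q = butlast q @ [last q]" by simp
  then have "vs = butlast q @ last q # v" using q by (metis append.assoc append_Cons append_Nil)
  then show ?thesis by blast
qed
lemma l5: "prefix (vs @ [a]) w \<Longrightarrow> vs = p @ x # v \<Longrightarrow> sublist (x # v @ [a]) w"
proof -
  assume "prefix (vs @ [a]) w" "vs = p @ x # v"
  then obtain r where "w = p @ (x # v @ [a]) @ r" by (auto simp: prefix_def)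
  then show ?thesis unfolding sublist_def by blast
qed

theorem lemma7:
  fixes w :: "'a list"
  assumes "w \<noteq> []" and "LSP w"
  shows "\<exists>a \<in> set w. LSP (w @ [a])"
proof -
  define S where "S = {v. suffix v w \<and> left_special v w}"
  have finS: "finite S"
  proof -
    have "S \<subseteq> set (suffixes w)" by (auto simp: S_def)
    then show ?thesis using finite_subset by blast
  qed
  have Spre: "prefix v w" if "v \<in> S" for v using that assms(2) by (auto simp: S_def LSP_def)
  have Sshort: "length v < length w" if "v \<in> S" for v
  proof -
    from that obtain x where "sublist (x # v) w" by (auto simp: S_def left_special_def)
    then show ?thesis using sublist_length_le by fastforce
  qed
  have main: "LSP (w @ [a])" if aw: "a \<in> set w"
    and H: "\<And>v x y. suffix (x # v) w \<Longrightarrow> sublist (y # v @ [a]) w \<Longrightarrow> x \<noteq> y \<Longrightarrow> v \<in> S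
            \<Longrightarrow> prefix (v @ [a]) w" for a
  proof (unfold LSP_def, intro allI impI)
    fix u assume ls: "left_special u (w @ [a])"
    then obtain x y where xy: "x \<noteq> y" "sublist (x # u) (w @ [a])" "sublist (y # u) (w @ [a])"
      by (auto simp: left_special_def)
    show "prefix u (w @ [a])"
    proof (cases "sublist (x # u) w \<and> sublist (y # u) w")
      case True
      then have "left_special u w" using xy by (auto simp: left_special_def)
      then show ?thesis using assms(2) by (auto simp: LSP_def)
    next
      case False
      have gen: "prefix u (w @ [a])" if g: "x' \<noteq> y'" "sublist (x' # u) (w @ [a])" "sublist (y' # u) (w @ [a])"
        "\<not> sublist (x' # u) w" for x' y'
      proof -
        obtain s where s: "x' # u = s @ [a]" "suffix s w" using new_fact_suffix[OF g(2) g(4)] by blast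
        show ?thesis
        proof (cases u rule: rev_cases)
          case Nil
          then show ?thesis by simp
        next
          case (snoc v a')
          then have sv: "s = x' # v" "a' = a" using s(1) by auto
          have sxv: "suffix (x' # v) w" using s(2) sv by simp
          have yv: "sublist (y' # v @ [a]) w"
          proof (rule ccontr)
            assume "\<not> sublist (y' # v @ [a]) w"
            then obtain t where "y' # v @ [a] = t @ [a]" "suffix t w"
              using new_fact_suffix[of "y' # v @ [a]" w a] g(3) snoc sv by auto
            then have "suffix (y' # v) w" by simp
            then show False using suffix_cons_eq[OF sxv] g(1) by blast
          qed
          have "v \<in> S"
          proof -
            have "suffix v w" using sxv by (metis suffix_ConsD)
            moreover have "sublist (x' # v) w" using sxv by (simp add: suffix_imp_sublist)
            moreover have "sublist (y' # v) w" using yv by (rule l1)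
            ultimately show ?thesis using g(1) by (auto simp: S_def left_special_def)
          qed
          then have "prefix (v @ [a]) w" using H[OF sxv yv g(1)] by simp
          then show ?thesis using snoc sv by (simp add: prefix_append)
        qed
      qed
      show ?thesis
      proof (cases "sublist (x # u) w")
        case True
        then have "\<not> sublist (y # u) w" using False by simp
        then show ?thesis using gen[of y x] xy by auto
      next
        case f: False
        then show ?thesis using gen[of x y] xy by auto
      qed
    qed
  qed
  show ?thesis
  proof (cases "S = {}")
    case True
    have "hd w \<in> set w" using assms(1) by simp
    then show ?thesis using main[of "hd w"] True by blast
  next
    case False
    obtain vs where vs: "vs \<in> S" "\<forall>v\<in>S. length v \<le> length vs"
      using l2[OF finS False] by blast
    define a where "a = w ! length vs"
    have pva: "prefix (vs @ [a]) w"
    proof -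
      obtain r where r: "w = vs @ r" using Spre[OF vs(1)] by (auto simp: prefix_def)
      have "r \<noteq> []" using Sshort[OF vs(1)] r by auto
      then have "w ! length vs = hd r" using r by (simp add: nth_append hd_conv_nth)
      moreover have "w = (vs @ [hd r]) @ tl r" using r \<open>r \<noteq> []\<close> by simp
      ultimately show ?thesis unfolding a_def by (metis prefixI)
    qed
    have "a \<in> set w" using pva by (rule l3)
    moreover have "LSP (w @ [a])"
    proof (rule main[OF \<open>a \<in> set w\<close>])
      fix v x y assume sxv: "suffix (x # v) w" and yv: "sublist (y # v @ [a]) w" and "x \<noteq> y" and vS: "v \<in> S"
      have "length v \<le> length vs" using vs(2) vS by blast
      have "suffix v vs" using vS vs(1) \<open>length v \<le> length vs\<close> unfolding S_def
        using suffix_length_suffix by blast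
      show "prefix (v @ [a]) w"
      proof (cases "v = vs")
        case True then show ?thesis using pva by simp
      next
        case False
        then obtain p z where pz: "vs = p @ z # v" using l4[OF \<open>suffix v vs\<close> False] by blast
        have "suffix (p @ z # v) w" using vs(1) pz unfolding S_def by simp
        then have "suffix (z # v) w" by (rule suffix_appendD)
        then have "z = x" using suffix_cons_eq[OF sxv] by simp
        have "sublist (x # v @ [a]) w" using l5[OF pva pz] \<open>z = x\<close> by simp
        then have "left_special (v @ [a]) w" using yv \<open>x \<noteq> y\<close> unfolding left_special_def by blast
        then show ?thesis using assms(2) by (auto simp: LSP_def)
      qed
    qed
    ultimately show ?thesis by blast
  qed
qed

end
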